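(* Let $k\ge2$ be an integer. If there exists an integer $\alpha\ge2$ such that $N_\alpha(k,k)<N_{\alpha+1}(k,k)$, then at least one of the following holds: (1) Letting $W_{k,\alpha}$ be the set of words over $\{1,\dots,\alpha+1\}$ of length $N_\alpha(k,k)$ that contain no factor which is a $k$-power or a $k$-anti-power, for every $w\in W_{k,\alpha}$ the two factors of $w$ of length $N_\alpha(k,k)-1$ each use exactly $\alpha+1$ distinct letters. (2) There exists a word $w$ over $\{1,\dots,\alpha\}$, containing no factor which is a $k$-power or a $k$-anti-power, of the form $$w=u_1(1u_1)^{k-1}x_1=u_2(2u_2)^{k-1}x_2=\cdots=u_\alpha(\alpha u_\alpha)^{k-1}x_\alpha,$$ where $x_1,\dots,x_\alpha,u_1,\dots,u_\alpha$ are finite words with $|u_1|<\cdots<|u_\alpha|$ and, for all $1\le i<j\le\alpha$, $$\gcd(|u_i|+1,|u_j|+1)\le\frac{|u_j|+1}{k-1}.$$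
   Context: A $k$-power is a word $u^k$ ($k$ concatenated copies of $u$) for a nonempty word $u$. A $k$-anti-power is a word $w=w_1\cdots w_k$ with $|w_1|=\cdots=|w_k|$ and $w_1,\dots,w_k$ pairwise distinct. $N_\alpha(k,k)$ is the smallest positive integer $N$ such that every word of length $N$ over an alphabet of size $\alpha$ contains a factor (contiguous subword) that is a $k$-power or a $k$-anti-power. In $(a u)^{k-1}$, $a$ denotes the single letter $a$. *)

theory Defs
  imports Complex_Main
begin

definition is_factor :: "nat list \<Rightarrow> nat list \<Rightarrow> bool" where
  "is_factor v w \<longleftrightarrow> (\<exists>p s. w = p @ v @ s)"

definition is_k_power :: "nat \<Rightarrow> nat list \<Rightarrow> bool" where
  "is_k_power k v \<longleftrightarrow> (\<exists>u. u \<noteq> [] \<and> v = concat (replicate k u))"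

definition is_k_antipower :: "nat \<Rightarrow> nat list \<Rightarrow> bool" where
  "is_k_antipower k v \<longleftrightarrow>
     (\<exists>ws m. length ws = k \<and> v = concat ws \<and> (\<forall>b\<in>set ws. length b = m) \<and> distinct ws)"

definition avoids :: "nat \<Rightarrow> nat list \<Rightarrow> bool" where
  "avoids k w \<longleftrightarrow> \<not> (\<exists>v. is_factor v w \<and> (is_k_power k v \<or> is_k_antipower k v))"

definition N_kk :: "nat \<Rightarrow> nat \<Rightarrow> nat" where
  "N_kk \<alpha> k = (LEAST N. 0 < N \<and> (\<forall>w. length w = N \<and> set w \<subseteq> {1..\<alpha>} \<longrightarrow> \<not> avoids k w))"

definition W_set :: "nat \<Rightarrow> nat \<Rightarrow> nat list set" where
  "W_set k \<alpha> = {w. set w \<subseteq> {1..\<alpha>+1} \<and> length w = N_kk \<alpha> k \<and> avoids k w}"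

end

theory Submission
  imports Defs
begin

lemma factor_Cons: "is_factor v xs \<Longrightarrow> is_factor v (c#xs)"
  unfolding is_factor_def by (metis append_Cons)

lemma factor_rev: "is_factor v w \<Longrightarrow> is_factor (rev v) (rev w)"
  unfolding is_factor_def by (metis append.assoc rev_append)

lemma power_rev: "is_k_power k v \<Longrightarrow> is_k_power k (rev v)"
  unfolding is_k_power_def
  by (metis Nil_is_rev_conv rev_concat map_replicate rev_replicate)

lemma antipower_rev: "is_k_antipower k v \<Longrightarrow> is_k_antipower k (rev v)"
  unfolding is_k_antipower_def
proof (elim exE conjE)
  fix ws m assume a: "length ws = k" "v = concat ws" "\<forall>b\<in>set ws. length b = m" "distinct ws"
  show "\<exists>ws m. length ws = k \<and> rev v = concat ws \<and> (\<forall>b\<in>set ws. length b = m) \<and> distinct ws"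
    apply (rule exI[of _ "map rev (rev ws)"], rule exI[of _ m])
    using a by (auto simp: rev_concat distinct_map inj_on_def)
qed

lemma avoids_rev: "avoids k w \<Longrightarrow> avoids k (rev w)"
  unfolding avoids_def
  by (metis factor_rev power_rev antipower_rev rev_rev_ident)

lemma power_map: "is_k_power k v \<Longrightarrow> is_k_power k (map h v)"
  unfolding is_k_power_def by (auto simp: map_concat)

lemma antipower_map: "inj_on h (set v) \<Longrightarrow> is_k_antipower k v \<Longrightarrow> is_k_antipower k (map h v)"
  unfolding is_k_antipower_def
proof (elim exE conjE)
  fix ws m assume inj: "inj_on h (set v)" and a: "length ws = k" "v = concat ws" "\<forall>b\<in>set ws. length b = m" "distinct ws"
  have "inj_on (map h) (set ws)"
  proof (rule inj_onI)
    fix b1 b2 assume "b1 \<in> set ws" "b2 \<in> set ws" "map h b1 = map h b2"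
    moreover have "set b1 \<subseteq> set v" "set b2 \<subseteq> set v" using a \<open>b1 \<in> set ws\<close> \<open>b2 \<in> set ws\<close> by auto
    ultimately show "b1 = b2" using inj inj_on_map_eq_map[of h b1 b2]
      by (meson inj_on_subset le_sup_iff set_append subset_refl inj_on_Un) 
  qed
  then show "\<exists>ws m. length ws = k \<and> map h v = concat ws \<and> (\<forall>b\<in>set ws. length b = m) \<and> distinct ws"
    apply (intro exI[of _ "map (map h) ws"] exI[of _ m])
    using a by (auto simp: map_concat distinct_map)
qed

lemma avoids_map:
  assumes inj: "inj_on f (set w)" and av: "avoids k w"
  shows "avoids k (map f w)"
  unfolding avoids_def
proof
  assume "\<exists>v. is_factor v (map f w) \<and> (is_k_power k v \<or> is_k_antipower k v)"
  then obtain v p s where e: "map f w = p @ v @ s" and bad: "is_k_power k v \<or> is_k_antipower k v"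
    unfolding is_factor_def by blast
  have "\<exists>us vs. w = us@vs \<and> p = map f us \<and> v@s = map f vs"
    using e by (simp add: map_eq_append_conv)
  then obtain p' r where "w = p' @ r" "map f r = v @ s" by metis
  moreover have "\<exists>us vs. r = us@vs \<and> v = map f us \<and> s = map f vs"
    using \<open>map f r = v @ s\<close> by (simp add: map_eq_append_conv)
  then obtain v' s' where "r = v' @ s'" "map f v' = v" by metis
  ultimately obtain p' v' s' where w: "w = p' @ v' @ s'" and vv: "map f v' = v"
    by blast
  define g where "g = inv_into (set w) f"
  have vg: "map g v = v'" unfolding g_def using vv w inj
    by (auto intro!: map_idI simp: inv_into_f_f)
  have "inj_on g (set v)" unfolding g_def using vv w
    by (intro inj_on_inv_into) auto
  then have "is_k_power k v' \<or> is_k_antipower k v'"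
    using bad power_map antipower_map vg by metis
  moreover have "is_factor v' w" using w unfolding is_factor_def by blast
  ultimately show False using av unfolding avoids_def by blast
qed

lemma avoids_Cons: "avoids k (c#w) \<Longrightarrow> avoids k w"
  unfolding avoids_def using factor_Cons by blast

lemma antipower_swap:
  assumes "is_k_antipower k (d#v0)" "c \<notin> set v0"
  shows "is_k_antipower k (c#v0)"
proof -
  obtain ws m where a: "length ws = k" "d#v0 = concat ws" "\<forall>b\<in>set ws. length b = m" "distinct ws"
    using assms(1) unfolding is_k_antipower_def by blast
  then obtain b rest where ws: "ws = b # rest" by (cases ws) auto
  have "b \<noteq> []"
  proof
    assume "b = []"
    then have "m = 0" using a ws by auto
    then have "\<forall>b\<in>set ws. b = []" using a by auto
    then have "concat ws = []" by simp
    then show False using a by (metis list.distinct(1))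
  qed
  then obtain b' where b: "b = d # b'" and v0: "v0 = b' @ concat rest" using a ws
    by (cases b) auto
  have "c#b' \<notin> set rest"
  proof
    assume "c#b' \<in> set rest"
    then have "c \<in> set (concat rest)" by (auto intro!: bexI[of _ "c#b'"])
    then show False using assms(2) v0 by auto
  qed
  then show ?thesis unfolding is_k_antipower_def
    apply (intro exI[of _ "(c#b') # rest"] exI[of _ m])
    using a ws b v0 by auto
qed

lemma power_Cons:
  assumes "is_k_power k (d#v0)" "k \<ge> 1"
  shows "\<exists>z. v0 = z @ concat (replicate (k-1) (d#z))"
proof -
  obtain u where u: "u \<noteq> []" "d#v0 = concat (replicate k u)"
    using assms(1) unfolding is_k_power_def by blast
  obtain k' where k: "k = Suc k'" using assms(2) by (cases k) auto
  obtain e z where "u = e # z" using u by (cases u) auto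
  then show ?thesis using u k by auto
qed

lemma concat_rep_nth:
  "n < m * length y \<Longrightarrow> concat (replicate m y) ! n = y ! (n mod length y)"
proof (induction m arbitrary: n)
  case 0 then show ?case by simp
next
  case (Suc m)
  show ?case
  proof (cases "n < length y")
    case True then show ?thesis by (simp add: nth_append)
  next
    case False
    then have "concat (replicate (Suc m) y) ! n = concat (replicate m y) ! (n - length y)"
      by (simp add: nth_append)
    also have "\<dots> = y ! ((n - length y) mod length y)" using Suc False by auto
    also have "(n - length y) mod length y = n mod length y" using False
      by (simp add: le_mod_geq)
    finally show ?thesis .
  qed
qed

lemma rep_shift: "z @ concat (replicate m (d#z)) = concat (replicate m (z@[d])) @ z"
  by (induction m) auto

lemma Per:
  assumes w: "w = z @ concat (replicate m (d#z)) @ x"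
    and n: "n < m*(length z+1) + length z"
  shows "w ! n = (z@[d]) ! (n mod (length z + 1))"
proof -
  have w2: "w = concat (replicate m (z@[d])) @ z @ x" using w rep_shift[of z m d]
    by (metis append.assoc)
  have len: "length (concat (replicate m (z@[d]))) = m * (length z + 1)"
    by (simp add: length_concat sum_list_replicate)
  show ?thesis
  proof (cases "n < m*(length z+1)")
    case True
    then show ?thesis using w2 len concat_rep_nth[of n m "z@[d]"] by (simp add: nth_append)
  next
    case False
    then obtain r where r: "n = m*(length z+1) + r" using le_Suc_ex by (metis not_less)
    have rl: "r < length z" using n r by simp
    have "w ! n = z ! r" using w2 len r rl by (simp add: nth_append)
    moreover have "n mod (length z + 1) = r"
    proof -
      have "n = r + (length z + 1) * m" using r by simp
      then have "n mod (length z + 1) = r mod (length z + 1)" by (metis mod_mult_self2)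
      then show ?thesis using rl by simp
    qed
    ultimately show ?thesis using rl by (simp add: nth_append)
  qed
qed

lemma G:
  assumes k: "k \<ge> 2"
    and w1: "w = z1 @ concat (replicate (k-1) (d1#z1)) @ x1"
    and w2: "w = z2 @ concat (replicate (k-1) (d2#z2)) @ x2"
    and lt: "length z1 < length z2" and ne: "d1 \<noteq> d2"
  shows "(k-1)*(length z1 + 1) \<le> length z2 + 1"
proof (rule ccontr)
  assume "\<not> ?thesis"
  then have q: "length z2 + 1 < (k-1)*(length z1 + 1)" by simp
  define p where "p = length z1 + 1"
  define q where "q = length z2 + 1"
  have pq: "p < q" using lt p_def q_def by simp
  have q2: "q < (k-1)*p" using q p_def q_def by simp
  have kq: "p < (k-1)*q" using pq k by (metis One_nat_def Suc_1 Suc_le_lessD less_le_trans mult_le_mono1 nat_mult_1 order.strict_implies_order diff_Suc_1 diff_le_mono)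
  have a1: "w ! (p-1) = d1"
    using Per[OF w1, of "p-1"] q2 p_def k
    by (simp add: nth_append)
  have a2: "w ! (q-1) = d2"
    using Per[OF w2, of "q-1"] kq q_def k
    by (simp add: nth_append)
  have b1: "w ! (q-1) = w ! (p-1+q)"
  proof -
    have "w ! (q-1) = (z1@[d1]) ! ((q-1) mod p)"
      using Per[OF w1, of "q-1"] q2 p_def pq by simp
    moreover have "w ! (p-1+q) = (z1@[d1]) ! ((p-1+q) mod p)"
      using Per[OF w1, of "p-1+q"] q2 p_def pq by simp
    moreover have "(p-1+q) mod p = (q-1) mod p" using p_def q_def pq
      by (metis Nat.add_diff_assoc2 add.commute le_add2 mod_add_self2 q_def Suc_eq_plus1 le_add1 add_diff_cancel_left')
    ultimately show ?thesis by simp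
  qed
  have b2: "w ! (p-1+q) = w ! (p-1)"
  proof -
    have "(k-1)*(length z2+1) = (k-1)*q" by (simp add: q_def)
    then have bb: "p-1+q < (k-1)*(length z2+1) + length z2" using kq q_def pq p_def by linarith
    have "w ! (p-1+q) = (z2@[d2]) ! ((p-1+q) mod q)"
      using Per[OF w2 bb] q_def by simp
    moreover have "w ! (p-1) = (z2@[d2]) ! ((p-1) mod q)"
      using Per[OF w2, of "p-1"] kq q_def pq by simp
    moreover have "(p-1+q) mod q = (p-1) mod q" by simp
    ultimately show ?thesis by simp
  qed
  show False using a1 a2 b1 b2 ne by simp
qed

lemma keyL:
  fixes k \<alpha> N :: nat
  assumes k: "k \<ge> 2"
    and PA: "\<forall>w. length w = N \<and> set w \<subseteq> {1..\<alpha>} \<longrightarrow> \<not> avoids k w"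
    and wdef: "w = c # w2" and wset: "set w \<subseteq> {1..\<alpha>+1}" and av: "avoids k w"
    and cd: "card (set w2) \<noteq> \<alpha>+1" and len: "length w = N"
  shows "\<exists>w u x. set w \<subseteq> {1..\<alpha>} \<and> avoids k w \<and>
            (\<forall>i\<in>{1..\<alpha>}. w = u i @ concat (replicate (k-1) (i # u i)) @ x i) \<and>
            (\<forall>i j. 1 \<le> i \<and> i < j \<and> j \<le> \<alpha> \<longrightarrow> length (u i) < length (u j)) \<and>
            (\<forall>i j. 1 \<le> i \<and> i < j \<and> j \<le> \<alpha> \<longrightarrow>
               real (gcd (length (u i) + 1) (length (u j) + 1))
                 \<le> real (length (u j) + 1) / real (k - 1))"
proof -
  define A where "A = set w2"
  have finA: "finite A" unfolding A_def by simp
  have "A \<subseteq> {1..\<alpha>+1}" using wset wdef A_def by auto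
  then have "card A \<le> \<alpha>+1" using card_mono[of "{1..\<alpha>+1}" A] by simp
  then have cA: "card A \<le> \<alpha>" using cd A_def by simp
  have noinj: False if hB: "finite B" "card B \<le> \<alpha>" "set v \<subseteq> B" "length v = N" "avoids k v" for v B
  proof -
    obtain f where f: "f ` B \<subseteq> {1..\<alpha>}" "inj_on f B"
      using card_le_inj[of B "{1..\<alpha>}"] hB(1,2) by auto
    have "avoids k (map f v)" using avoids_map[of f v k] f hB by (meson inj_on_subset)
    moreover have "set (map f v) \<subseteq> {1..\<alpha>}" using f hB by auto
    ultimately show False using PA hB by simp
  qed
  have cnot: "c \<notin> A" and cA2: "card A = \<alpha>"
  proof -
    have "\<not> (c \<in> A \<or> card A < \<alpha>)"
    proof
      assume h: "c \<in> A \<or> card A < \<alpha>"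
      have "card (set w) \<le> \<alpha>"
      proof -
        have "set w = insert c A" using wdef A_def by simp
        then show ?thesis using h cA finA by (auto simp: card_insert_if)
      qed
      then show False using noinj[of "set w" w] av len by simp
    qed
    then show "c \<notin> A" "card A = \<alpha>" using cA by auto
  qed
  have av2: "avoids k w2" using av wdef avoids_Cons by simp
  have each: "\<exists>z x. w2 = z @ concat (replicate (k-1) (d#z)) @ x" if dA: "d \<in> A" for d
  proof -
    have "\<not> avoids k (d # w2)"
    proof
      assume "avoids k (d#w2)"
      moreover have "set (d#w2) = A" using dA A_def by auto
      ultimately show False using noinj[of A "d#w2"] finA cA2 len wdef by simp
    qed
    then obtain v p s where e: "d#w2 = p @ v @ s" and bad: "is_k_power k v \<or> is_k_antipower k v"
      unfolding avoids_def is_factor_def by blast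
    show ?thesis
    proof (cases "p = [] \<and> v \<noteq> []")
      case False
      have "is_factor v w"
      proof (cases "p = []")
        case False
        then obtain p' where "p = d # p'" "w2 = p' @ v @ s" using e by (cases p) auto
        then show ?thesis using wdef unfolding is_factor_def by (metis append_Cons)
      next
        case True
        then have "v = []" using False by simp
        then show ?thesis unfolding is_factor_def by (metis append_Nil)
      qed
      then have False using av bad unfolding avoids_def by blast
      then show ?thesis ..
    next
      case True
      then obtain v0 where v: "v = d # v0" and w2: "w2 = v0 @ s" using e by (cases v) auto
      have "\<not> is_k_antipower k v"
      proof
        assume "is_k_antipower k v"
        then have "is_k_antipower k (c#v0)" using antipower_swap[of k d v0 c] v cnot w2 A_def by auto
        moreover have "is_factor (c#v0) w" using wdef w2 unfolding is_factor_def
          by (metis append_Cons append_Nil)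
        ultimately show False using av unfolding avoids_def by blast
      qed
      then have "is_k_power k v" using bad by simp
      then obtain z where "v0 = z @ concat (replicate (k-1) (d#z))"
        using power_Cons[of k d v0] v k by auto
      then show ?thesis using w2 by auto
    qed
  qed
  then obtain Z X where ZX: "\<And>d. d \<in> A \<Longrightarrow> w2 = Z d @ concat (replicate (k-1) (d # Z d)) @ X d"
    by metis
  define L where "L d = length (Z d)" for d
  have nthL: "w2 ! L d = d" if "d \<in> A" for d
  proof -
    obtain k' where "k - 1 = Suc k'" using k by (metis Suc_diff_Suc Suc_le_eq Suc_1 less_le_trans le_refl numeral_2_eq_2 Suc_le_lessD)
    then show ?thesis using ZX[OF that] unfolding L_def by (metis append_Cons concat.simps(2) replicate_Suc nth_append_length append.assoc)
  qed
  have injL: "inj_on L A" by (metis inj_onI nthL)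
  define \<sigma> where "\<sigma> d = card {e\<in>A. L e < L d} + 1" for d
  have smono: "\<sigma> d < \<sigma> e" if "d \<in> A" "e \<in> A" "L d < L e" for d e
  proof -
    have "{e'\<in>A. L e' < L d} \<subset> {e'\<in>A. L e' < L e}" using that by auto
    then show ?thesis unfolding \<sigma>_def using finA by (simp add: psubset_card_mono)
  qed
  have injs: "inj_on \<sigma> A"
  proof (rule inj_onI)
    fix d e assume "d \<in> A" "e \<in> A" "\<sigma> d = \<sigma> e"
    then show "d = e" using smono injL by (metis inj_on_eq_iff less_irrefl nat_neq_iff)
  qed
  have srange: "\<sigma> d \<in> {1..\<alpha>}" if "d \<in> A" for d
  proof -
    have "{e\<in>A. L e < L d} \<subseteq> A - {d}" by auto
    then have "card {e\<in>A. L e < L d} \<le> card (A - {d})" using finA by (simp add: card_mono)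
    also have "\<dots> = \<alpha> - 1" using that cA2 finA by simp
    finally show ?thesis unfolding \<sigma>_def using that cA2 finA
      by (metis atLeastAtMost_iff card_0_eq empty_iff le_add2 add.commute le_diff_conv2 not_gr0 less_one Suc_leI add_le_mono1 le_add_diff_inverse2 linorder_not_le)
  qed
  have img: "\<sigma> ` A = {1..\<alpha>}"
  proof (rule card_subset_eq)
    show "\<sigma> ` A \<subseteq> {1..\<alpha>}" using srange by auto
    show "card (\<sigma> ` A) = card {1..\<alpha>}" using card_image[OF injs] cA2 by simp
  qed simp
  have srev: "L d < L e" if "d \<in> A" "e \<in> A" "\<sigma> d < \<sigma> e" for d e
    using that smono injL by (metis inj_on_eq_iff less_asym nat_neq_iff)
  define \<tau> where "\<tau> = inv_into A \<sigma>"
  have tA: "\<tau> i \<in> A" and st: "\<sigma> (\<tau> i) = i" if "i \<in> {1..\<alpha>}" for i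
    using that img unfolding \<tau>_def by (auto intro: inv_into_into f_inv_into_f)
  define W where "W = map \<sigma> w2"
  define U where "U = (\<lambda>i. map \<sigma> (Z (\<tau> i)))"
  define XX where "XX = (\<lambda>i. map \<sigma> (X (\<tau> i)))"
  have c1: "set W \<subseteq> {1..\<alpha>}" using img A_def W_def by auto
  have c2: "avoids k W" using avoids_map[of \<sigma> w2 k] injs av2 A_def W_def by simp
  have c3: "\<forall>i\<in>{1..\<alpha>}. W = U i @ concat (replicate (k-1) (i # U i)) @ XX i"
  proof
    fix i assume i: "i \<in> {1..\<alpha>}"
    show "W = U i @ concat (replicate (k-1) (i # U i)) @ XX i"
      using ZX[OF tA[OF i]] st[OF i] unfolding W_def U_def XX_def by (simp add: map_concat)
  qed
  have c45: "length (U i) < length (U j) \<and> real (gcd (length (U i) + 1) (length (U j) + 1))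
                 \<le> real (length (U j) + 1) / real (k - 1)" if h: "1 \<le> i \<and> i < j \<and> j \<le> \<alpha>" for i j
  proof -
    have i: "i \<in> {1..\<alpha>}" and j: "j \<in> {1..\<alpha>}" using h by auto
    have lt: "L (\<tau> i) < L (\<tau> j)" using srev[OF tA[OF i] tA[OF j]] st[OF i] st[OF j] h by simp
    have ne: "\<tau> i \<noteq> \<tau> j" using st[OF i] st[OF j] h by (metis less_irrefl)
    have Gb: "(k-1)*(length (Z (\<tau> i)) + 1) \<le> length (Z (\<tau> j)) + 1"
      using G[OF k ZX[OF tA[OF i]] ZX[OF tA[OF j]]] lt ne unfolding L_def by simp
    define P where "P = length (Z (\<tau> i)) + 1"
    define Q where "Q = length (Z (\<tau> j)) + 1"
    have "gcd P Q \<le> P" unfolding P_def by (simp add: gcd_le1_nat)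
    then have "(k-1) * gcd P Q \<le> Q" using Gb P_def Q_def by (metis le_trans mult_le_mono2)
    then have "real (k-1) * real (gcd P Q) \<le> real Q" by (metis of_nat_le_iff of_nat_mult)
    moreover have "real (k-1) > 0" using k by simp
    ultimately have "real (gcd P Q) \<le> real Q / real (k-1)" by (simp add: le_divide_eq mult.commute)
    then show ?thesis using lt unfolding P_def Q_def U_def L_def by simp
  qed
  show ?thesis
    apply (rule exI[of _ W], rule exI[of _ U], rule exI[of _ XX])
    using c1 c2 c3 c45 by blast
qed

theorem lemma5p2:
  fixes k \<alpha> :: nat
  assumes "k \<ge> 2" and "\<alpha> \<ge> 2" and "N_kk \<alpha> k < N_kk (\<alpha>+1) k"
  shows "(\<forall>w\<in>W_set k \<alpha>.
            card (set (take (N_kk \<alpha> k - 1) w)) = \<alpha> + 1 \<and>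
            card (set (drop 1 w)) = \<alpha> + 1)
       \<or> (\<exists>w u x. set w \<subseteq> {1..\<alpha>} \<and> avoids k w \<and>
            (\<forall>i\<in>{1..\<alpha>}. w = u i @ concat (replicate (k-1) (i # u i)) @ x i) \<and>
            (\<forall>i j. 1 \<le> i \<and> i < j \<and> j \<le> \<alpha> \<longrightarrow> length (u i) < length (u j)) \<and>
            (\<forall>i j. 1 \<le> i \<and> i < j \<and> j \<le> \<alpha> \<longrightarrow>
               real (gcd (length (u i) + 1) (length (u j) + 1))
                 \<le> real (length (u j) + 1) / real (k - 1)))"
proof -
  define P where "P a N \<longleftrightarrow> 0 < N \<and> (\<forall>w. length w = N \<and> set w \<subseteq> {1..a} \<longrightarrow> \<not> avoids k w)" for a N
  have NP: "N_kk a k = (LEAST N. P a N)" for a unfolding N_kk_def P_def by simp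
  have ex: "\<exists>N. P \<alpha> N"
  proof (rule ccontr)
    assume h: "\<not> (\<exists>N. P \<alpha> N)"
    have sub: "{1..\<alpha>} \<subseteq> {1..\<alpha>+1}" by auto
    have "P (\<alpha>+1) N \<Longrightarrow> P \<alpha> N" for N unfolding P_def using sub by blast
    then have "\<not> (\<exists>N. P (\<alpha>+1) N)" using h by blast
    then have "(\<lambda>N. P \<alpha> N) = (\<lambda>N. P (\<alpha>+1) N)" using h by auto
    then have "N_kk \<alpha> k = N_kk (\<alpha>+1) k" unfolding NP by metis
    then show False using assms(3) by simp
  qed
  define N where "N = N_kk \<alpha> k"
  have PN: "P \<alpha> N" unfolding N_def NP using ex by (rule LeastI_ex)
  then have Npos: "0 < N" and PA: "\<forall>w. length w = N \<and> set w \<subseteq> {1..\<alpha>} \<longrightarrow> \<not> avoids k w"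
    unfolding P_def by auto
  show ?thesis
  proof (cases "\<forall>w\<in>W_set k \<alpha>.
            card (set (take (N_kk \<alpha> k - 1) w)) = \<alpha> + 1 \<and>
            card (set (drop 1 w)) = \<alpha> + 1")
    case True then show ?thesis by (rule disjI1)
  next
    case False
    then obtain w where wW: "w \<in> W_set k \<alpha>" and
      fail: "card (set (take (N - 1) w)) \<noteq> \<alpha> + 1 \<or> card (set (drop 1 w)) \<noteq> \<alpha> + 1"
      unfolding N_def by blast
    have ws: "set w \<subseteq> {1..\<alpha>+1}" and wl: "length w = N" and wa: "avoids k w"
      using wW unfolding W_set_def N_def by auto
    have wne: "w \<noteq> []" using wl Npos by auto
    have "\<exists>w u x. set w \<subseteq> {1..\<alpha>} \<and> avoids k w \<and>
            (\<forall>i\<in>{1..\<alpha>}. w = u i @ concat (replicate (k-1) (i # u i)) @ x i) \<and>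
            (\<forall>i j. 1 \<le> i \<and> i < j \<and> j \<le> \<alpha> \<longrightarrow> length (u i) < length (u j)) \<and>
            (\<forall>i j. 1 \<le> i \<and> i < j \<and> j \<le> \<alpha> \<longrightarrow>
               real (gcd (length (u i) + 1) (length (u j) + 1))
                 \<le> real (length (u j) + 1) / real (k - 1))"
    proof (cases "card (set (drop 1 w)) \<noteq> \<alpha> + 1")
      case True
      show ?thesis
        apply (rule keyL[OF assms(1) PA, of w "hd w" "tl w"])
        using True wne ws wa wl by (auto simp: drop_Suc)
    next
      case False
      then have c: "card (set (take (N - 1) w)) \<noteq> \<alpha> + 1" using fail by simp
      have tk: "take (N - 1) w = butlast w" using wl by (simp add: butlast_conv_take)
      have rw: "rev w = last w # rev (butlast w)" using wne
        by (metis append_butlast_last_id rev.simps(2) rev_rev_ident rev_append rev_singleton_conv append_Cons append_Nil)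
      show ?thesis
        apply (rule keyL[OF assms(1) PA, of "rev w" "last w" "rev (butlast w)"])
        using rw c tk ws avoids_rev[OF wa] wl by auto
    qed
    then show ?thesis by (rule disjI2)
  qed
qed

end
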